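(* Let $1\le k\le n-1$. The simplicial complexes $\Delta^{NN}_{k,n}$ and $\Delta^{NC}_{k,n}$ are pure of dimension $k(n-k)$, i.e. all their maximal faces have exactly $k(n-k)+1$ vertices.
   Context: $V_{k,n}$ denotes the set of integer vectors $I=(i_1,\dots,i_k)$ with $1\le i_1<\dots<i_k\le n$. Two arcs $(p<p')$, $(q<q')$ cross if $p<q<p'<q'$ or $q<p<q'<p'$; they nest if $p<q<q'<p'$ or $q<p<p'<q'$. $I,J\in V_{k,n}$ are noncrossing if for all $1\le a<b\le k$ with $i_\ell=j_\ell$ for all $a<\ell<b$, the arcs $(i_a<i_b)$ and $(j_a<j_b)$ do not cross; they are nonnesting if for all $1\le a<b\le k$ these arcs do not nest. The noncrossing complex $\Delta^{NC}_{k,n}$ (resp. nonnesting complex $\Delta^{NN}_{k,n}$) is the flag simplicial complex with vertex set $V_{k,n}$ whose faces are the sets of pairwise noncrossing (resp. pairwise nonnesting) vectors. *)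

theory Defs
  imports Main
begin

text \<open>Vectors I = (i_1 < ... < i_k) with entries in {1..n}, represented as lists
  (0-based positions).\<close>
definition V :: "nat \<Rightarrow> nat \<Rightarrow> nat list set" where
  "V k n = {I. length I = k \<and> sorted_wrt (<) I \<and> set I \<subseteq> {1..n}}"

definition arcs_cross :: "nat \<Rightarrow> nat \<Rightarrow> nat \<Rightarrow> nat \<Rightarrow> bool" where
  "arcs_cross p p' q q' \<longleftrightarrow> (p < q \<and> q < p' \<and> p' < q') \<or> (q < p \<and> p < q' \<and> q' < p')"

definition arcs_nest :: "nat \<Rightarrow> nat \<Rightarrow> nat \<Rightarrow> nat \<Rightarrow> bool" where
  "arcs_nest p p' q q' \<longleftrightarrow> (p < q \<and> q < q' \<and> q' < p') \<or> (q < p \<and> p < p' \<and> p' < q')"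

definition noncrossing :: "nat list \<Rightarrow> nat list \<Rightarrow> bool" where
  "noncrossing I J \<longleftrightarrow>
     (\<forall>a b. a < b \<and> b < length I \<and> (\<forall>l. a < l \<and> l < b \<longrightarrow> I ! l = J ! l)
        \<longrightarrow> \<not> arcs_cross (I ! a) (I ! b) (J ! a) (J ! b))"

definition nonnesting :: "nat list \<Rightarrow> nat list \<Rightarrow> bool" where
  "nonnesting I J \<longleftrightarrow>
     (\<forall>a b. a < b \<and> b < length I \<longrightarrow> \<not> arcs_nest (I ! a) (I ! b) (J ! a) (J ! b))"

definition flag_faces :: "'a set \<Rightarrow> ('a \<Rightarrow> 'a \<Rightarrow> bool) \<Rightarrow> 'a set set" where
  "flag_faces Vs R = {F. F \<subseteq> Vs \<and> (\<forall>x\<in>F. \<forall>y\<in>F. x \<noteq> y \<longrightarrow> R x y)}"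

definition NC_complex :: "nat \<Rightarrow> nat \<Rightarrow> nat list set set" where
  "NC_complex k n = flag_faces (V k n) noncrossing"

definition NN_complex :: "nat \<Rightarrow> nat \<Rightarrow> nat list set set" where
  "NN_complex k n = flag_faces (V k n) nonnesting"

definition maximal_faces :: "'a set set \<Rightarrow> 'a set set" where
  "maximal_faces \<Delta> = {F \<in> \<Delta>. \<forall>G\<in>\<Delta>. F \<subseteq> G \<longrightarrow> G = F}"

end

theory Submission
  imports Defs "HOL-Library.List_Lexorder"
begin


lemma V_mem: "I \<in> V k n \<longleftrightarrow> length I = k \<and> sorted_wrt (<) I \<and> set I \<subseteq> {1..n}"
  by (simp add: V_def)

lemma V_lt: "I \<in> V k n \<Longrightarrow> i < j \<Longrightarrow> j < k \<Longrightarrow> I!i < I!j"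
  by (auto simp: V_def sorted_wrt_iff_nth_less)

lemma V_bnd: "I \<in> V k n \<Longrightarrow> i < k \<Longrightarrow> 1 \<le> I!i \<and> I!i \<le> n"
  unfolding V_def using nth_mem by fastforce

lemma V_ge: "I \<in> V k n \<Longrightarrow> i < k \<Longrightarrow> Suc i \<le> I!i"
proof (induction i)
  case 0 then show ?case using V_bnd by fastforce
next
  case (Suc i)
  then have "I!i < I!Suc i" using V_lt by auto
  with Suc show ?case by auto
qed

lemma V_finite: "finite (V k n)"
proof -
  have "V k n \<subseteq> {xs. set xs \<subseteq> {1..n} \<and> length xs = k}" by (auto simp: V_def)
  moreover have "finite {xs. set xs \<subseteq> {1..n} \<and> length xs = k}"
    by (rule finite_lists_length_eq) simp
  ultimately show ?thesis by (rule finite_subset)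
qed

lemma V_snoc_D:
  assumes "t @ [x] \<in> V (Suc m) n"
  shows "t \<in> V m (n - 1)" "\<And>i. i < m \<Longrightarrow> t!i < x" "1 \<le> x" "x \<le> n"
proof -
  have L: "length t = m" using assms by (simp add: V_def)
  have S: "sorted_wrt (<) (t@[x])" and Se: "set (t@[x]) \<subseteq> {1..n}" using assms by (auto simp: V_def)
  then have lt: "\<And>z. z \<in> set t \<Longrightarrow> z < x" by (auto simp: sorted_wrt_append)
  show "\<And>i. i < m \<Longrightarrow> t!i < x" using lt L by auto
  show "1 \<le> x" "x \<le> n" using Se by auto
  have "set t \<subseteq> {1..n-1}" using Se lt \<open>x \<le> n\<close> by fastforce
  then show "t \<in> V m (n - 1)" using S L by (auto simp: V_def sorted_wrt_append)
qed

lemma V_snoc_I: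
  assumes "t \<in> V m n'" "\<And>i. i < m \<Longrightarrow> t!i < x" "1 \<le> x" "x \<le> n"  "n' \<le> n"
  shows "t @ [x] \<in> V (Suc m) n"
proof -
  have "\<And>z. z \<in> set t \<Longrightarrow> z < x" using assms(1,2) by (auto simp: V_def in_set_conv_nth)
  then show ?thesis using assms by (auto simp: V_def sorted_wrt_append)
qed

lemma snoc_butlast: "I \<in> V (Suc m) n \<Longrightarrow> I = butlast I @ [last I]"
proof -
  assume "I \<in> V (Suc m) n"
  then have "I \<noteq> []" by (auto simp: V_def)
  then show ?thesis by simp
qed

lemma maxface_D:
  assumes "F \<in> maximal_faces (flag_faces Vs R)"
  shows "F \<subseteq> Vs" "\<And>x y. x \<in> F \<Longrightarrow> y \<in> F \<Longrightarrow> x \<noteq> y \<Longrightarrow> R x y"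
  using assms by (auto simp: maximal_faces_def flag_faces_def)

lemma maxface_add:
  assumes "F \<in> maximal_faces (flag_faces Vs R)" "z \<in> Vs"
    "\<And>I. I \<in> F \<Longrightarrow> I \<noteq> z \<Longrightarrow> R z I \<and> R I z"
  shows "z \<in> F"
proof -
  have "insert z F \<in> flag_faces Vs R" using assms by (auto simp: maximal_faces_def flag_faces_def)
  then have "insert z F = F" using assms(1) by (auto simp: maximal_faces_def)
  then show ?thesis by auto
qed



lemma card_step:
  assumes FV: "F \<subseteq> V (Suc m) n" and fin: "finite F"
    and inj: "\<And>t x x' s y'. t@[x] \<in> F \<Longrightarrow> t@[x'] \<in> F \<Longrightarrow> x < x' \<Longrightarrow>
               s@[x] \<in> F \<Longrightarrow> s@[y'] \<in> F \<Longrightarrow> x < y' \<Longrightarrow> t = s"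
    and cov: "\<And>x. Suc m \<le> x \<Longrightarrow> x \<le> n - 1 \<Longrightarrow> \<exists>t x'. t@[x] \<in> F \<and> t@[x'] \<in> F \<and> x < x'"
  shows "card F = card (butlast ` F) + (n - Suc m)"
proof -
  define NM where "NM = {I\<in>F. \<exists>x'. butlast I @ [x'] \<in> F \<and> last I < x'}"
  have dec: "\<And>I. I \<in> F \<Longrightarrow> I = butlast I @ [last I]" using FV snoc_butlast by blast
  have "bij_betw last NM {Suc m..n-1}"
    unfolding bij_betw_def
  proof
    show "inj_on last NM"
    proof (rule inj_onI)
      fix I J assume I: "I \<in> NM" and J: "J \<in> NM" and e: "last I = last J"
      from I obtain a where a: "butlast I @ [a] \<in> F" "last I < a" by (auto simp: NM_def)
      from J obtain b where b: "butlast J @ [b] \<in> F" "last J < b" by (auto simp: NM_def)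
      have I1: "butlast I @ [last I] \<in> F" using I dec[of I] by (auto simp: NM_def)
      have J1: "butlast J @ [last I] \<in> F" using J dec[of J] e by (auto simp: NM_def)
      have "butlast I = butlast J"
        using inj[OF I1 a(1) a(2) J1 b(1)] b(2) e by simp
      then show "I = J" using dec[of I] dec[of J] I J e by (auto simp: NM_def)
    qed
    show "last ` NM = {Suc m..n - 1}"
    proof
      show "last ` NM \<subseteq> {Suc m..n - 1}"
      proof
        fix z assume "z \<in> last ` NM"
        then obtain I where I: "I \<in> NM" "z = last I" by auto
        then obtain a where a: "butlast I @ [a] \<in> F" "last I < a" by (auto simp: NM_def)
        have IV: "I \<in> V (Suc m) n" using I FV by (auto simp: NM_def)
        have "last I = I ! m" using IV by (metis V_mem diff_Suc_1 last_conv_nth list.size(3) nat.distinct(1))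
        then have "Suc m \<le> last I" using V_ge[OF IV, of m] by simp
        moreover have "a \<le> n" using V_snoc_D(4)[of "butlast I" a m n] a FV by auto
        ultimately show "z \<in> {Suc m..n - 1}" using I a by auto
      qed
      show "{Suc m..n - 1} \<subseteq> last ` NM"
      proof
        fix x assume "x \<in> {Suc m..n - 1}"
        then obtain t x' where t: "t@[x] \<in> F" "t@[x'] \<in> F" "x < x'" using cov by (meson atLeastAtMost_iff)
        then have "t@[x] \<in> NM" by (auto simp: NM_def)
        then show "x \<in> last ` NM" by force
      qed
    qed
  qed
  then have cNM: "card NM = n - Suc m" using bij_betw_same_card by fastforce
  have "bij_betw butlast (F - NM) (butlast ` F)"
    unfolding bij_betw_def
  proof
    show "inj_on butlast (F - NM)"
    proof (rule inj_onI)
      fix I J assume I: "I \<in> F - NM" and J: "J \<in> F - NM" and e: "butlast I = butlast J"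
      have "\<not> last I < last J"
      proof
        assume "last I < last J"
        then have "I \<in> NM" using I J e dec[of J] by (auto simp: NM_def)
        then show False using I by auto
      qed
      moreover have "\<not> last J < last I"
      proof
        assume "last J < last I"
        then have "J \<in> NM" using I J e dec[of I] by (auto simp: NM_def)
        then show False using J by auto
      qed
      ultimately have "last I = last J" by auto
      then show "I = J" using dec[of I] dec[of J] I J e by auto
    qed
    show "butlast ` (F - NM) = butlast ` F"
    proof
      show "butlast ` (F - NM) \<subseteq> butlast ` F" by auto
      show "butlast ` F \<subseteq> butlast ` (F - NM)"
      proof
        fix t assume "t \<in> butlast ` F"
        then obtain I where I: "I \<in> F" "t = butlast I" by auto
        define X where "X = {x. t @ [x] \<in> F}"
        have "X \<subseteq> (\<lambda>J. last J) ` F" unfolding X_def by force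
        then have fX: "finite X" using fin finite_surj by blast
        have "last I \<in> X" using I dec[of I] by (auto simp: X_def)
        then have "X \<noteq> {}" by auto
        then have Mx: "Max X \<in> X" using fX Max_in by blast
        have "t @ [Max X] \<notin> NM"
        proof
          assume "t @ [Max X] \<in> NM"
          then obtain a where "t @ [a] \<in> F" "Max X < a" by (auto simp: NM_def)
          then have "a \<in> X" "Max X < a" by (auto simp: X_def)
          then show False using fX Max_ge[of X a] by linarith
        qed
        then have "t @ [Max X] \<in> F - NM" using Mx by (auto simp: X_def)
        then show "t \<in> butlast ` (F - NM)" by force
      qed
    qed
  qed
  then have cR: "card (F - NM) = card (butlast ` F)" using bij_betw_same_card by fastforce
  have "NM \<subseteq> F" by (auto simp: NM_def)
  then have "card F = card NM + card (F - NM)"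
    using fin card_Diff_subset[of NM F] card_mono[of F NM] by (simp add: finite_subset)
  then show ?thesis using cNM cR by simp
qed



lemma base_case:
  assumes F: "F \<in> maximal_faces (flag_faces (V 1 n) R)"
    and R: "\<And>I J. I \<in> V 1 n \<Longrightarrow> J \<in> V 1 n \<Longrightarrow> R I J" and n1: "1 \<le> n"
  shows "finite F \<and> card F = 1 * (n - 1) + 1"
proof -
  have "V 1 n \<in> flag_faces (V 1 n) R" using R by (auto simp: flag_faces_def)
  moreover have "F \<subseteq> V 1 n" using maxface_D(1)[OF F] .
  ultimately have FV: "F = V 1 n" using F by (auto simp: maximal_faces_def)
  have "V 1 n = (\<lambda>x. [x]) ` {1..n}"
  proof
    show "V 1 n \<subseteq> (\<lambda>x. [x]) ` {1..n}"
    proof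
      fix I assume "I \<in> V 1 n"
      then obtain x where "I = [x]" "x \<in> {1..n}" by (auto simp: V_def length_Suc_conv)
      then show "I \<in> (\<lambda>x. [x]) ` {1..n}" by auto
    qed
    show "(\<lambda>x. [x]) ` {1..n} \<subseteq> V 1 n" by (auto simp: V_def)
  qed
  moreover have "card ((\<lambda>x. [x]) ` {1..n}) = n"
    by (subst card_image) (auto simp: inj_on_def)
  ultimately show ?thesis using FV V_finite n1 by auto
qed

lemma step_generic:
  assumes F: "F \<in> maximal_faces (flag_faces (V (Suc m) n) R)"
    and IH: "card (butlast ` F) = m * (n - 1 - m) + 1"
    and inj: "\<And>t x x' s y'. t@[x] \<in> F \<Longrightarrow> t@[x'] \<in> F \<Longrightarrow> x < x' \<Longrightarrow>
               s@[x] \<in> F \<Longrightarrow> s@[y'] \<in> F \<Longrightarrow> x < y' \<Longrightarrow> t = s"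
    and cov: "\<And>x. Suc m \<le> x \<Longrightarrow> x \<le> n - 1 \<Longrightarrow> \<exists>t x'. t@[x] \<in> F \<and> t@[x'] \<in> F \<and> x < x'"
  shows "finite F \<and> card F = Suc m * (n - Suc m) + 1"
proof -
  have FV: "F \<subseteq> V (Suc m) n" using maxface_D(1)[OF F] .
  then have fin: "finite F" using V_finite finite_subset by blast
  have "card F = card (butlast ` F) + (n - Suc m)"
  proof (rule card_step[OF FV fin])
    fix t x x' s y' assume "t@[x] \<in> F" "t@[x'] \<in> F" "x < x'" "s@[x] \<in> F" "s@[y'] \<in> F" "x < y'"
    then show "t = s" using inj by blast
  next
    fix x assume "Suc m \<le> x" "x \<le> n - 1"
    then show "\<exists>t x'. t@[x] \<in> F \<and> t@[x'] \<in> F \<and> x < x'" using cov by blast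
  qed
  moreover have "n - 1 - m = n - Suc m" by simp
  ultimately have "card F = m * (n - Suc m) + (n - Suc m) + 1" using IH by simp
  then show ?thesis using fin by simp
qed

definition ld :: "nat list \<Rightarrow> nat list \<Rightarrow> nat" where
  "ld t s = Max {i. i < length t \<and> t!i \<noteq> s!i}"

lemma ld_props:
  assumes "length t = length s" "t \<noteq> s"
  shows "ld t s < length t" "t ! ld t s \<noteq> s ! ld t s"
    "\<And>l. ld t s < l \<Longrightarrow> l < length t \<Longrightarrow> t!l = s!l"
proof -
  let ?D = "{i. i < length t \<and> t!i \<noteq> s!i}"
  have fin: "finite ?D" by simp
  have ne: "?D \<noteq> {}"
  proof
    assume "?D = {}"
    then have "\<And>i. i < length t \<Longrightarrow> t!i = s!i" by blast
    then have "t = s" using assms(1) by (intro nth_equalityI) auto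
    then show False using assms(2) by simp
  qed
  have "ld t s \<in> ?D" unfolding ld_def using Max_in[OF fin ne] .
  then show "ld t s < length t" "t ! ld t s \<noteq> s ! ld t s" by auto
  fix l assume "ld t s < l" "l < length t"
  show "t!l = s!l"
  proof (rule ccontr)
    assume "t!l \<noteq> s!l"
    then have "l \<in> ?D" using \<open>l < length t\<close> by simp
    then have "l \<le> ld t s" unfolding ld_def using Max_ge[OF fin] by blast
    then show False using \<open>ld t s < l\<close> by simp
  qed
qed

lemma ld_unique:
  assumes "d < length t" "t!d \<noteq> s!d" "\<And>l. d < l \<Longrightarrow> l < length t \<Longrightarrow> t!l = s!l"
  shows "ld t s = d"
proof -
  let ?D = "{i. i < length t \<and> t!i \<noteq> s!i}"
  have fin: "finite ?D" by simp
  have "d \<in> ?D" using assms by auto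
  moreover have "\<forall>i\<in>?D. i \<le> d"
  proof
    fix i assume i: "i \<in> ?D"
    show "i \<le> d"
    proof (rule ccontr)
      assume "\<not> i \<le> d"
      then have "t!i = s!i" using assms(3) i by simp
      then show False using i by simp
    qed
  qed
  ultimately show ?thesis unfolding ld_def by (intro Max_eqI[OF fin]) auto
qed

lemma ld_sym: "length t = length s \<Longrightarrow> ld t s = ld s t"
proof -
  assume "length t = length s"
  then have "{i. i < length t \<and> t!i \<noteq> s!i} = {i. i < length s \<and> s!i \<noteq> t!i}" by auto
  then show ?thesis unfolding ld_def by simp
qed

lemma cross_sym: "arcs_cross p p' q q' = arcs_cross q q' p p'"
  unfolding arcs_cross_def by auto

lemma nest_sym: "arcs_nest p p' q q' = arcs_nest q q' p p'"
  unfolding arcs_nest_def by auto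

lemma nc_sym1: "length I = length J \<Longrightarrow> noncrossing I J \<Longrightarrow> noncrossing J I"
  unfolding noncrossing_def
proof (intro allI impI)
  fix a b assume L: "length I = length J" and H: "\<forall>a b. a < b \<and> b < length I \<and> (\<forall>l. a < l \<and> l < b \<longrightarrow> I ! l = J ! l) \<longrightarrow>
        \<not> arcs_cross (I ! a) (I ! b) (J ! a) (J ! b)"
    and ab: "a < b \<and> b < length J \<and> (\<forall>l. a < l \<and> l < b \<longrightarrow> J ! l = I ! l)"
  then have "\<not> arcs_cross (I ! a) (I ! b) (J ! a) (J ! b)" by (metis L)
  then show "\<not> arcs_cross (J ! a) (J ! b) (I ! a) (I ! b)" using cross_sym by blast
qed

lemma nc_sym: "length I = length J \<Longrightarrow> noncrossing I J = noncrossing J I"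
  using nc_sym1 by metis

lemma nc_refl: "noncrossing t t"
  unfolding noncrossing_def arcs_cross_def by auto

lemma nc_snoc:
  assumes "length t = m" "length s = m"
  shows "noncrossing (t@[x]) (s@[y]) \<longleftrightarrow> noncrossing t s \<and>
     (\<forall>a<m. (\<forall>l. a < l \<and> l < m \<longrightarrow> t!l = s!l) \<longrightarrow> \<not> arcs_cross (t!a) x (s!a) y)"
proof
  assume H: "noncrossing (t@[x]) (s@[y])"
  show "noncrossing t s \<and>
     (\<forall>a<m. (\<forall>l. a < l \<and> l < m \<longrightarrow> t!l = s!l) \<longrightarrow> \<not> arcs_cross (t!a) x (s!a) y)"
  proof
    show "noncrossing t s" unfolding noncrossing_def
    proof (intro allI impI)
      fix a b assume ab: "a < b \<and> b < length t \<and> (\<forall>l. a < l \<and> l < b \<longrightarrow> t ! l = s ! l)"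
      then have "\<forall>l. a < l \<and> l < b \<longrightarrow> (t@[x]) ! l = (s@[y]) ! l" using assms by (simp add: nth_append)
      then have "\<not> arcs_cross ((t@[x])!a) ((t@[x])!b) ((s@[y])!a) ((s@[y])!b)"
        using H ab assms unfolding noncrossing_def by auto
      then show "\<not> arcs_cross (t ! a) (t ! b) (s ! a) (s ! b)" using ab assms by (simp add: nth_append)
    qed
    show "\<forall>a<m. (\<forall>l. a < l \<and> l < m \<longrightarrow> t!l = s!l) \<longrightarrow> \<not> arcs_cross (t!a) x (s!a) y"
    proof (intro allI impI)
      fix a assume a: "a < m" and ag: "\<forall>l. a < l \<and> l < m \<longrightarrow> t!l = s!l"
      then have "\<forall>l. a < l \<and> l < m \<longrightarrow> (t@[x]) ! l = (s@[y]) ! l" using assms by (simp add: nth_append)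
      then have "\<not> arcs_cross ((t@[x])!a) ((t@[x])!m) ((s@[y])!a) ((s@[y])!m)"
        using H a assms unfolding noncrossing_def by auto
      then show "\<not> arcs_cross (t ! a) x (s ! a) y" using a assms by (simp add: nth_append)
    qed
  qed
next
  assume H: "noncrossing t s \<and>
     (\<forall>a<m. (\<forall>l. a < l \<and> l < m \<longrightarrow> t!l = s!l) \<longrightarrow> \<not> arcs_cross (t!a) x (s!a) y)"
  show "noncrossing (t@[x]) (s@[y])" unfolding noncrossing_def
  proof (intro allI impI)
    fix a b assume ab: "a < b \<and> b < length (t@[x]) \<and> (\<forall>l. a < l \<and> l < b \<longrightarrow> (t@[x]) ! l = (s@[y]) ! l)"
    show "\<not> arcs_cross ((t@[x])!a) ((t@[x])!b) ((s@[y])!a) ((s@[y])!b)"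
    proof (cases "b < m")
      case True
      then have "\<forall>l. a < l \<and> l < b \<longrightarrow> t ! l = s ! l" using ab assms by (auto simp: nth_append)
      then show ?thesis using H ab True assms unfolding noncrossing_def by (auto simp: nth_append)
    next
      case False
      then have bm: "b = m" using ab assms by auto
      then have "\<forall>l. a < l \<and> l < m \<longrightarrow> t ! l = s ! l" using ab assms by (auto simp: nth_append)
      then show ?thesis using H ab bm assms by (auto simp: nth_append)
    qed
  qed
qed

lemma nc_snoc_ld:
  assumes "length t = m" "length s = m" "t \<noteq> s"
  shows "noncrossing (t@[x]) (s@[y]) \<longleftrightarrow> noncrossing t s \<and> \<not> arcs_cross (t!ld t s) x (s!ld t s) y"
proof -
  let ?d = "ld t s"
  have d: "?d < m" "t!?d \<noteq> s!?d" "\<And>l. ?d < l \<Longrightarrow> l < m \<Longrightarrow> t!l = s!l"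
    using ld_props[of t s] assms by auto
  have "(\<forall>a<m. (\<forall>l. a < l \<and> l < m \<longrightarrow> t!l = s!l) \<longrightarrow> \<not> arcs_cross (t!a) x (s!a) y)
        \<longleftrightarrow> \<not> arcs_cross (t!?d) x (s!?d) y"
  proof
    assume "\<forall>a<m. (\<forall>l. a < l \<and> l < m \<longrightarrow> t!l = s!l) \<longrightarrow> \<not> arcs_cross (t!a) x (s!a) y"
    then show "\<not> arcs_cross (t!?d) x (s!?d) y" using d by auto
  next
    assume c: "\<not> arcs_cross (t!?d) x (s!?d) y"
    show "\<forall>a<m. (\<forall>l. a < l \<and> l < m \<longrightarrow> t!l = s!l) \<longrightarrow> \<not> arcs_cross (t!a) x (s!a) y"
    proof (intro allI impI)
      fix a assume a: "a < m" "\<forall>l. a < l \<and> l < m \<longrightarrow> t!l = s!l"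
      consider "a < ?d" | "a = ?d" | "?d < a" by linarith
      then show "\<not> arcs_cross (t!a) x (s!a) y"
      proof cases
        case 1 then show ?thesis using a d by auto
      next
        case 2 then show ?thesis using c by simp
      next
        case 3 then have "t!a = s!a" using d a by auto
        then show ?thesis unfolding arcs_cross_def by auto
      qed
    qed
  qed
  then show ?thesis using nc_snoc[OF assms(1,2)] by simp
qed

lemma nc_snoc_same: "length t = m \<Longrightarrow> noncrossing (t@[x]) (t@[y])"
  using nc_snoc[of t m t x y] nc_refl by (auto simp: arcs_cross_def)



lemma face_pair:
  assumes "F \<in> flag_faces Vs R" "I \<in> F" "J \<in> F" "I \<noteq> J"
  shows "R I J"
  using assms by (auto simp: flag_faces_def)

lemma V_len: "I \<in> V k n \<Longrightarrow> length I = k" by (simp add: V_def)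

lemma snoc_len: "t @ [x] \<in> V (Suc m) n \<Longrightarrow> length t = m" by (simp add: V_def)

lemma NC_pair:
  assumes F: "F \<in> flag_faces (V (Suc m) n) noncrossing"
    and "t@[x] \<in> F" "s@[y] \<in> F" "t \<noteq> s"
  shows "noncrossing t s \<and> \<not> arcs_cross (t!ld t s) x (s!ld t s) y"
proof -
  have FV: "F \<subseteq> V (Suc m) n" using F by (auto simp: flag_faces_def)
  have L: "length t = m" "length s = m" using assms FV snoc_len by blast+
  have "noncrossing (t@[x]) (s@[y])" using face_pair[OF F assms(2,3)] assms(4) by simp
  then show ?thesis using nc_snoc_ld[OF L assms(4)] by simp
qed

lemma snoc_lt: "t @ [x] \<in> V (Suc m) n \<Longrightarrow> i < m \<Longrightarrow> t!i < x"
  using V_snoc_D(2) by blast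

lemma NC_inj:
  assumes F: "F \<in> flag_faces (V (Suc m) n) noncrossing"
    and tx: "t@[x] \<in> F" and tx': "t@[x'] \<in> F" and xx': "x < x'"
    and sx: "s@[x] \<in> F" and sy: "s@[y'] \<in> F" and xy: "x < y'"
  shows "t = s"
proof (rule ccontr)
  assume ne: "t \<noteq> s"
  have FV: "F \<subseteq> V (Suc m) n" using F by (auto simp: flag_faces_def)
  have L: "length t = m" "length s = m" using tx sx FV snoc_len by blast+
  define d where "d = ld t s"
  have d: "d < m" "t!d \<noteq> s!d" using ld_props[of t s] L ne d_def by auto
  have q: "s!d < x" using snoc_lt[of s x m n d] sx FV d by auto
  have p: "t!d < x" using snoc_lt[of t x m n d] tx FV d by auto
  have P1: "\<not> arcs_cross (t!d) x (s!d) y'" using NC_pair[OF F tx sy ne] d_def by simp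
  have P2: "\<not> arcs_cross (t!d) x' (s!d) x" using NC_pair[OF F tx' sx ne] d_def by simp
  show False
  proof (cases "t!d < s!d")
    case True then show ?thesis using P1 q xy unfolding arcs_cross_def by auto
  next
    case False then have "s!d < t!d" using d by auto
    then show ?thesis using P2 p xx' unfolding arcs_cross_def by auto
  qed
qed



lemma sorted_last_lt:
  assumes "t \<in> V m n'" "0 < m" "t!(m-1) < x"
  shows "\<And>i. i < m \<Longrightarrow> t!i < x"
proof -
  fix i assume i: "i < m"
  show "t!i < x"
  proof (cases "i = m - 1")
    case True then show ?thesis using assms by simp
  next
    case False then have "i < m - 1" using i by auto
    then have "t!i < t!(m-1)" using V_lt[OF assms(1)] assms(2) by auto
    then show ?thesis using assms by simp
  qed
qed

lemma NC_ext:
  assumes F: "F \<in> flag_faces (V (Suc m) n) noncrossing" and m: "0 < m"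
    and sV: "s \<in> V m (n - 1)" and sT: "s \<notin> butlast ` F"
    and comp: "\<And>t. t \<in> butlast ` F \<Longrightarrow> noncrossing s t"
  shows "\<exists>y. s@[y] \<in> V (Suc m) n \<and> (\<forall>I\<in>F. noncrossing (s@[y]) I \<and> noncrossing I (s@[y]))"
proof -
  have FV: "F \<subseteq> V (Suc m) n" using F by (auto simp: flag_faces_def)
  have Ls: "length s = m" using sV V_len by blast
  define Bad where "Bad z \<longleftrightarrow> (\<exists>t x. t@[x] \<in> F \<and> t \<noteq> s \<and> s!(ld s t) < t!(ld s t) \<and> t!(ld s t) < z \<and> z < x)" for z
  define P where "P z \<longleftrightarrow> (\<forall>i<m. s!i < z) \<and> \<not> Bad z" for z
  have s1: "1 \<le> s!0" using V_bnd[OF sV] m by auto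
  have sn: "\<And>i. i < m \<Longrightarrow> s!i \<le> n - 1" using V_bnd[OF sV] by auto
  have n1: "1 \<le> n - 1" using s1 sn[of 0] m by auto
  have "P n"
  proof -
    have "\<forall>i<m. s!i < n" using sn n1 by fastforce
    moreover have "\<not> Bad n"
    proof
      assume "Bad n"
      then obtain t x where "t@[x] \<in> F" "n < x" unfolding Bad_def by blast
      then show False using V_snoc_D(4)[of t x m n] FV by auto
    qed
    ultimately show ?thesis unfolding P_def by simp
  qed
  define y where "y = (LEAST z. P z)"
  have Py: "P y" unfolding y_def using \<open>P n\<close> by (rule LeastI)
  have yn: "y \<le> n" unfolding y_def using \<open>P n\<close> by (rule Least_le)
  have ymin: "\<And>z. z < y \<Longrightarrow> \<not> P z" unfolding y_def using not_less_Least by blast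
  have sy_lt: "\<And>i. i < m \<Longrightarrow> s!i < y" using Py unfolding P_def by blast
  have y1: "1 \<le> y" using sy_lt[of 0] m by auto
  have syV: "s@[y] \<in> V (Suc m) n" by (rule V_snoc_I[OF sV sy_lt y1 yn]) auto
  have main: "noncrossing (s@[y]) I" if I: "I \<in> F" for I
  proof -
    have IV: "I \<in> V (Suc m) n" using I FV by auto
    define t where "t = butlast I"
    define x where "x = last I"
    have Ieq: "I = t@[x]" using snoc_butlast[OF IV] t_def x_def by simp
    have tx: "t@[x] \<in> F" using I Ieq by simp
    have Lt: "length t = m" using snoc_len IV Ieq by metis
    have ts: "t \<noteq> s" using sT I t_def by auto
    have st: "s \<noteq> t" using ts by simp
    have nst: "noncrossing s t" using comp I t_def by auto
    define d where "d = ld s t"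
    have d: "d < m" "s!d \<noteq> t!d" "\<And>l. d < l \<Longrightarrow> l < m \<Longrightarrow> s!l = t!l"
      using ld_props[of s t] Ls Lt st d_def by auto
    have tlx: "\<And>i. i < m \<Longrightarrow> t!i < x" using snoc_lt IV Ieq by metis
    have "\<not> arcs_cross (s!d) y (t!d) x"
    proof
      assume cr: "arcs_cross (s!d) y (t!d) x"
      then consider (A) "s!d < t!d" "t!d < y" "y < x" | (B) "t!d < s!d" "s!d < x" "x < y"
        unfolding arcs_cross_def by auto
      then show False
      proof cases
        case A
        then have "Bad y" unfolding Bad_def using tx ts d_def by blast
        then show False using Py unfolding P_def by simp
      next
        case B
        have "s!(m-1) < x"
        proof (cases "d = m - 1")
          case True then show ?thesis using B by simp
        next
          case False then have "d < m - 1" using d by auto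
          then have "s!(m-1) = t!(m-1)" using d(3)[of "m-1"] m by auto
          then show ?thesis using tlx[of "m-1"] m by simp
        qed
        then have sx: "\<forall>i<m. s!i < x" using sorted_last_lt[OF sV m] by blast
        have "\<not> P x" using ymin B by simp
        then have "Bad x" using sx unfolding P_def by simp
        then obtain r x2 where r: "r@[x2] \<in> F" "r \<noteq> s" "s!(ld s r) < r!(ld s r)"
          "r!(ld s r) < x" "x < x2" unfolding Bad_def by blast
        have Lr: "length r = m" using r(1) FV snoc_len by blast
        define d' where "d' = ld s r"
        have d': "d' < m" "s!d' \<noteq> r!d'" "\<And>l. d' < l \<Longrightarrow> l < m \<Longrightarrow> s!l = r!l"
          using ld_props[of s r] Ls Lr r(2) d'_def by auto
        have e: "\<exists>e<m. t!e < r!e \<and> r!e < x \<and> (\<forall>l. e < l \<and> l < m \<longrightarrow> t!l = r!l)"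
        proof (cases "d = d'")
          case True
          then show ?thesis using B r d d' d'_def by (intro exI[of _ d]) auto
        next
          case False
          show ?thesis
          proof (cases "d < d'")
            case True
            have "t!d' = s!d'" using d(3)[of d'] True d' by auto
            then show ?thesis using r d d' d'_def True
              by (intro exI[of _ d']) (auto)
          next
            case False
            then have dd: "d' < d" using \<open>d \<noteq> d'\<close> by auto
            have "r!d = s!d" using d'(3)[of d] dd d by auto
            then show ?thesis using B d d' dd
              by (intro exI[of _ d]) auto
          qed
        qed
        then obtain e where e: "e < m" "t!e < r!e" "r!e < x" "\<And>l. e < l \<Longrightarrow> l < m \<Longrightarrow> t!l = r!l" by blast
        have tr: "t \<noteq> r" using e by auto
        have "ld t r = e" using ld_unique[of e t r] e Lt by auto
        then have "\<not> arcs_cross (t!e) x (r!e) x2" using NC_pair[OF F tx r(1) tr] by simp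
        then show False using e r unfolding arcs_cross_def by auto
      qed
    qed
    then have "noncrossing (s@[y]) (t@[x])" using nc_snoc_ld[OF Ls Lt st] nst d_def by simp
    then show ?thesis using Ieq by simp
  qed
  show ?thesis
  proof (intro exI conjI ballI)
    show "s@[y] \<in> V (Suc m) n" by (rule syV)
  next
    fix I assume "I \<in> F"
    then show "noncrossing (s@[y]) I" by (rule main)
  next
    fix I assume I: "I \<in> F"
    have "length I = length (s@[y])" using I FV syV V_len by (metis subsetD)
    then show "noncrossing I (s@[y])" using nc_sym main[OF I] by metis
  qed
qed



lemma revlex:
  assumes L: "length t = m" "length s = m" and d: "d < m" "t!d < s!d"
    and ag: "\<And>l. d < l \<Longrightarrow> l < m \<Longrightarrow> t!l = s!l"
  shows "rev t < rev s"
proof -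
  define i where "i = m - 1 - d"
  have im: "i < m" using d i_def by auto
  have tk: "take i (rev t) = take i (rev s)"
  proof (rule nth_equalityI)
    show "length (take i (rev t)) = length (take i (rev s))" using L by simp
    fix j assume "j < length (take i (rev t))"
    then have j: "j < i" using L im by simp
    then have "rev t ! j = t ! (m - Suc j)" "rev s ! j = s ! (m - Suc j)"
      using L im by (auto simp: rev_nth)
    moreover have "t ! (m - Suc j) = s ! (m - Suc j)" using ag[of "m - Suc j"] j i_def d by auto
    ultimately show "take i (rev t) ! j = take i (rev s) ! j" using j by simp
  qed
  have mi: "m - Suc i = d" using i_def d by auto
  have "rev t ! i = t ! d" "rev s ! i = s ! d" using L im mi by (auto simp: rev_nth)
  then have "(rev t, rev s) \<in> lexord {(u, v). u < v}"
    unfolding lexord_take_index_conv using tk im L d by auto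
  then show ?thesis by (simp add: list_less_def)
qed

lemma cone_nc:
  assumes J: "J \<in> V (Suc m) n" and mn: "Suc m \<le> n"
  shows "noncrossing ([1..<Suc m] @ [n]) J"
  unfolding noncrossing_def
proof (intro allI impI)
  let ?c = "[1..<Suc m] @ [n]"
  fix a b assume ab: "a < b \<and> b < length ?c \<and> (\<forall>l. a < l \<and> l < b \<longrightarrow> ?c ! l = J ! l)"
  have cv: "\<And>i. i < m \<Longrightarrow> ?c ! i = Suc i" by (simp add: nth_append del: upt_Suc)
  have cm: "?c ! m = n" by (simp add: nth_append del: upt_Suc)
  have lc: "length ?c = Suc m" by simp
  have am: "a < m" using ab lc by linarith
  have Ja: "Suc a \<le> J!a" using V_ge[OF J, of a] am by simp
  have Jb: "J!b \<le> n" using V_bnd[OF J, of b] ab lc by simp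
  show "\<not> arcs_cross (?c!a) (?c!b) (J!a) (J!b)"
  proof
    assume cr: "arcs_cross (?c!a) (?c!b) (J!a) (J!b)"
    have ca: "?c!a = Suc a" using cv am by simp
    show False
    proof (cases "b = m")
      case True
      then show False using cr ca cm Ja Jb unfolding arcs_cross_def by auto
    next
      case False
      then have bm: "b < m" using ab lc by linarith
      then have cb: "?c!b = Suc b" using cv by simp
      have "J!a < Suc b" using cr ca cb Ja unfolding arcs_cross_def by auto
      show False
      proof (cases "b = Suc a")
        case True then show False using \<open>J!a < Suc b\<close> cr ca cb Ja unfolding arcs_cross_def by auto
      next
        case False
        then have l: "a < Suc a" "Suc a < b" using ab by auto
        then have "J!(Suc a) = Suc (Suc a)" using ab cv[of "Suc a"] bm by auto
        moreover have "J!a < J!(Suc a)" using V_lt[OF J, of a "Suc a"] l bm by simp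
        ultimately show False using cr ca cb Ja unfolding arcs_cross_def by auto
      qed
    qed
  qed
qed

lemma NC_cover:
  assumes F: "F \<in> maximal_faces (flag_faces (V (Suc m) n) noncrossing)" and m: "0 < m"
    and x: "Suc m \<le> x" "x \<le> n - 1"
  shows "\<exists>t x'. t@[x] \<in> F \<and> t@[x'] \<in> F \<and> x < x'"
proof -
  have Ff: "F \<in> flag_faces (V (Suc m) n) noncrossing" using F by (simp add: maximal_faces_def)
  have FV: "F \<subseteq> V (Suc m) n" using maxface_D(1)[OF F] .
  have fin: "finite F" using FV V_finite finite_subset by blast
  define t0 where "t0 = [1..<Suc m]"
  have t0n: "t0 @ [n] \<in> V (Suc m) n" using x unfolding t0_def V_def by (auto simp: sorted_wrt_append)
  have t0F: "t0 @ [n] \<in> F"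
  proof (rule maxface_add[OF F t0n])
    fix I assume "I \<in> F" "I \<noteq> t0 @ [n]"
    then have IV: "I \<in> V (Suc m) n" using FV by auto
    have "noncrossing (t0@[n]) I" using cone_nc[OF IV] x unfolding t0_def by simp
    moreover have "length (t0@[n]) = length I" using IV t0n V_len by metis
    ultimately show "noncrossing (t0 @ [n]) I \<and> noncrossing I (t0 @ [n])" using nc_sym by metis
  qed
  define C where "C = {t. (\<exists>x'. t@[x'] \<in> F \<and> x < x') \<and> (\<forall>i<m. t!i < x) \<and> length t = m}"
  have "x < n" using x by auto
  moreover have "\<forall>i<m. t0!i < x" using x unfolding t0_def by (auto simp del: upt_Suc)
  moreover have "length t0 = m" unfolding t0_def by simp
  ultimately have t0C: "t0 \<in> C" unfolding C_def using t0F by blast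
  have "C \<subseteq> butlast ` F" unfolding C_def by force
  then have finC: "finite C" using fin finite_subset by blast
  define r where "r = Max (rev ` C)"
  have rin: "r \<in> rev ` C" unfolding r_def using finC t0C by (intro Max_in) auto
  then obtain ts where tsC: "ts \<in> C" and rts: "r = rev ts" by auto
  have rmax: "\<And>s. s \<in> C \<Longrightarrow> rev s \<le> rev ts"
  proof -
    fix s assume "s \<in> C"
    then have "rev s \<in> rev ` C" by simp
    then have "rev s \<le> Max (rev ` C)" using finC by (intro Max_ge) auto
    then show "rev s \<le> rev ts" using rts r_def by simp
  qed
  obtain x' where tsx': "ts@[x'] \<in> F" "x < x'" and tsx: "\<forall>i<m. ts!i < x" and Lts: "length ts = m"
    using tsC unfolding C_def by blast
  have tsV: "ts \<in> V m (n - 1)" using V_snoc_D(1) tsx' FV by blast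
  have tsxV: "ts @ [x] \<in> V (Suc m) n"
    by (rule V_snoc_I[OF tsV]) (use tsx x in auto)
  have tsxF: "ts @ [x] \<in> F"
  proof (rule maxface_add[OF F tsxV])
    fix I assume I: "I \<in> F" "I \<noteq> ts @ [x]"
    then have IV: "I \<in> V (Suc m) n" using FV by auto
    define s where "s = butlast I"
    define y where "y = last I"
    have Ieq: "I = s@[y]" using snoc_butlast[OF IV] s_def y_def by simp
    have Ls: "length s = m" using IV Ieq snoc_len by metis
    have syF: "s@[y] \<in> F" using I Ieq by simp
    have "noncrossing (ts@[x]) I"
    proof (cases "s = ts")
      case True then show ?thesis using nc_snoc_same Ieq Lts by metis
    next
      case False
      then have ne: "ts \<noteq> s" by simp
      define d where "d = ld ts s"
      have d: "d < m" "ts!d \<noteq> s!d" "\<And>l. d < l \<Longrightarrow> l < m \<Longrightarrow> ts!l = s!l"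
        using ld_props[of ts s] Ls Lts ne d_def by auto
      have P: "noncrossing ts s \<and> \<not> arcs_cross (ts!d) x' (s!d) y"
        using NC_pair[OF Ff tsx'(1) syF ne] d_def by simp
      have "\<not> arcs_cross (ts!d) x (s!d) y"
      proof
        assume cr: "arcs_cross (ts!d) x (s!d) y"
        then consider (A) "ts!d < s!d" "s!d < x" "x < y" | (B) "s!d < ts!d" "ts!d < y" "y < x"
          unfolding arcs_cross_def by auto
        then show False
        proof cases
          case B then show False using P tsx' unfolding arcs_cross_def by auto
        next
          case A
          show False
          proof (cases "\<forall>i<m. s!i < x")
            case True
            then have "s \<in> C" unfolding C_def using syF A Ls by blast
            then have "rev s \<le> rev ts" by (rule rmax)
            moreover have "rev ts < rev s" using revlex[OF Lts Ls d(1)] A d by auto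
            ultimately show False by simp
          next
            case False
            then obtain i where i: "i < m" "x \<le> s!i" by (auto simp: not_less)
            have sV: "s \<in> V m (n - 1)" using V_snoc_D(1) syF FV by blast
            have "s!i \<le> s!(m-1)"
            proof (cases "i = m - 1")
              case False then have "i < m - 1" using i by auto
              then show ?thesis using V_lt[OF sV, of i "m-1"] i by auto
            qed simp
            then have smx: "x \<le> s!(m-1)" using i by simp
            show False
            proof (cases "d = m - 1")
              case True then show False using A smx by simp
            next
              case False then have "d < m - 1" using d by auto
              then have "ts!(m-1) = s!(m-1)" using d(3)[of "m-1"] m by auto
              then show False using tsx m smx by (metis diff_less less_numeral_extra(1) not_le)
            qed
          qed
        qed
      qed
      then show ?thesis using nc_snoc_ld[OF Lts Ls ne] P d_def Ieq by simp
    qed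
    moreover have "length (ts@[x]) = length I" using IV tsxV V_len by metis
    ultimately show "noncrossing (ts @ [x]) I \<and> noncrossing I (ts @ [x])" using nc_sym by metis
  qed
  show ?thesis using tsxF tsx' by blast
qed



lemma T_face:
  assumes F: "F \<in> flag_faces (V (Suc m) n) R"
    and pr: "\<And>t x s y. t@[x] \<in> F \<Longrightarrow> s@[y] \<in> F \<Longrightarrow> t \<noteq> s \<Longrightarrow> R t s"
  shows "butlast ` F \<in> flag_faces (V m (n - 1)) R"
proof -
  have FV: "F \<subseteq> V (Suc m) n" using F by (auto simp: flag_faces_def)
  have "butlast ` F \<subseteq> V m (n - 1)"
  proof
    fix t assume "t \<in> butlast ` F"
    then obtain I where I: "I \<in> F" "t = butlast I" by auto
    then have "I = t @ [last I]" using snoc_butlast FV by blast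
    then show "t \<in> V m (n - 1)" using V_snoc_D(1)[of t "last I" m n] I FV by auto
  qed
  moreover have "\<forall>t\<in>butlast ` F. \<forall>s\<in>butlast ` F. t \<noteq> s \<longrightarrow> R t s"
  proof (intro ballI impI)
    fix t s assume "t \<in> butlast ` F" "s \<in> butlast ` F" "t \<noteq> s"
    then obtain I J where "I \<in> F" "t = butlast I" "J \<in> F" "s = butlast J" by auto
    then have "t @ [last I] \<in> F" "s @ [last J] \<in> F" using snoc_butlast FV by (metis subsetD)+
    then show "R t s" using pr \<open>t \<noteq> s\<close> by blast
  qed
  ultimately show ?thesis by (simp add: flag_faces_def)
qed

lemma NC_pure:
  "1 \<le> k \<Longrightarrow> k < n \<Longrightarrow> F \<in> maximal_faces (NC_complex k n) \<Longrightarrow> finite F \<and> card F = k * (n - k) + 1"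
proof (induction k arbitrary: n F)
  case 0 then show ?case by simp
next
  case (Suc m)
  have F: "F \<in> maximal_faces (flag_faces (V (Suc m) n) noncrossing)"
    using Suc.prems by (simp add: NC_complex_def)
  show ?case
  proof (cases "m = 0")
    case True
    have "finite F \<and> card F = 1 * (n - 1) + 1"
      by (rule base_case[of F n noncrossing]) (use F True Suc.prems in \<open>auto simp: noncrossing_def V_def\<close>)
    then show ?thesis using True by simp
  next
    case False
    then have m: "0 < m" by simp
    have Ff: "F \<in> flag_faces (V (Suc m) n) noncrossing" using F by (simp add: maximal_faces_def)
    have FV: "F \<subseteq> V (Suc m) n" using maxface_D(1)[OF F] .
    let ?T = "butlast ` F"
    have Tf: "?T \<in> flag_faces (V m (n - 1)) noncrossing"
      by (rule T_face[OF Ff]) (use NC_pair[OF Ff] in blast)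
    have Tmax: "?T \<in> maximal_faces (NC_complex m (n - 1))"
      unfolding maximal_faces_def NC_complex_def
    proof (intro CollectI conjI ballI impI)
      show "?T \<in> flag_faces (V m (n - 1)) noncrossing" by (rule Tf)
      fix G assume G: "G \<in> flag_faces (V m (n - 1)) noncrossing" and TG: "?T \<subseteq> G"
      show "G = ?T"
      proof (rule ccontr)
        assume "G \<noteq> ?T"
        then obtain s where sG: "s \<in> G" and sT: "s \<notin> ?T" using TG by blast
        have sV: "s \<in> V m (n - 1)" using G sG by (auto simp: flag_faces_def)
        have comp: "\<And>t. t \<in> ?T \<Longrightarrow> noncrossing s t"
        proof -
          fix t assume tT: "t \<in> ?T"
          then have "t \<in> G" "s \<noteq> t" using TG sT by auto
          then show "noncrossing s t" using G sG by (auto simp: flag_faces_def)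
        qed
        obtain y where y: "s@[y] \<in> V (Suc m) n" "\<forall>I\<in>F. noncrossing (s@[y]) I \<and> noncrossing I (s@[y])"
          using NC_ext[OF Ff m sV sT comp] by blast
        have "s@[y] \<in> F" by (rule maxface_add[OF F y(1)]) (use y(2) in blast)
        then have "s \<in> ?T" by force
        then show False using sT by simp
      qed
    qed
    have IH: "finite ?T \<and> card ?T = m * (n - 1 - m) + 1"
      using Suc.IH[OF _ _ Tmax] m Suc.prems by auto
    have "finite F \<and> card F = Suc m * (n - Suc m) + 1"
    proof (rule step_generic[OF F])
      show "card ?T = m * (n - 1 - m) + 1" using IH by simp
    next
      fix t x x' s y' assume "t@[x] \<in> F" "t@[x'] \<in> F" "x < x'" "s@[x] \<in> F" "s@[y'] \<in> F" "x < y'"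
      then show "t = s" using NC_inj[OF Ff] by blast
    next
      fix x assume "Suc m \<le> x" "x \<le> n - 1"
      then show "\<exists>t x'. t@[x] \<in> F \<and> t@[x'] \<in> F \<and> x < x'" using NC_cover[OF F m] by blast
    qed
    then show ?thesis by simp
  qed
qed



definition leq :: "nat list \<Rightarrow> nat list \<Rightarrow> bool" where
  "leq I J \<longleftrightarrow> (\<forall>i<length I. I!i \<le> J!i)"

lemma nn_iff:
  assumes I: "I \<in> V k n" and J: "J \<in> V k n"
  shows "nonnesting I J \<longleftrightarrow> leq I J \<or> leq J I"
proof
  assume H: "nonnesting I J"
  show "leq I J \<or> leq J I"
  proof (rule ccontr)
    assume "\<not> (leq I J \<or> leq J I)"
    then obtain a b where a: "a < k" "J!a < I!a" and b: "b < k" "I!b < J!b"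
      using V_len[OF I] V_len[OF J] unfolding leq_def by (auto simp: not_le)
    consider "a < b" | "b < a" | "a = b" by linarith
    then show False
    proof cases
      case 1
      have "I!a < I!b" using V_lt[OF I 1 b(1)] .
      then have "arcs_nest (I!a) (I!b) (J!a) (J!b)" using a b unfolding arcs_nest_def by auto
      then show False using H 1 b V_len[OF I] unfolding nonnesting_def by auto
    next
      case 2
      have "J!b < J!a" using V_lt[OF J 2 a(1)] .
      then have "arcs_nest (I!b) (I!a) (J!b) (J!a)" using a b unfolding arcs_nest_def by auto
      then show False using H 2 a V_len[OF I] unfolding nonnesting_def by auto
    next
      case 3 then show False using a b by simp
    qed
  qed
next
  assume H: "leq I J \<or> leq J I"
  show "nonnesting I J" unfolding nonnesting_def
  proof (intro allI impI)
    fix a b assume ab: "a < b \<and> b < length I"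
    then have "a < length I" by simp
    have b: "b < length J" using ab V_len[OF I] V_len[OF J] by simp
    have aJ: "a < length J" using ab V_len[OF I] V_len[OF J] by simp
    from H show "\<not> arcs_nest (I!a) (I!b) (J!a) (J!b)"
    proof
      assume "leq I J"
      then have "I!a \<le> J!a" "I!b \<le> J!b" using ab unfolding leq_def by auto
      then show ?thesis unfolding arcs_nest_def by auto
    next
      assume "leq J I"
      then have "J!a \<le> I!a" "J!b \<le> I!b" using b aJ unfolding leq_def by auto
      then show ?thesis unfolding arcs_nest_def by auto
    qed
  qed
qed

lemma leq_snoc:
  "length t = length s \<Longrightarrow> leq (t@[x]) (s@[y]) \<longleftrightarrow> leq t s \<and> x \<le> y"
  unfolding leq_def
proof
  assume L: "length t = length s" and H: "\<forall>i<length (t @ [x]). (t @ [x]) ! i \<le> (s @ [y]) ! i"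
  have "\<forall>i<length t. t ! i \<le> s ! i"
  proof (intro allI impI)
    fix i assume "i < length t"
    then show "t!i \<le> s!i" using H[rule_format, of i] L by (simp add: nth_append)
  qed
  moreover have "x \<le> y" using H[rule_format, of "length t"] L by (simp add: nth_append)
  ultimately show "(\<forall>i<length t. t ! i \<le> s ! i) \<and> x \<le> y" by simp
next
  assume L: "length t = length s" and H: "(\<forall>i<length t. t ! i \<le> s ! i) \<and> x \<le> y"
  show "\<forall>i<length (t @ [x]). (t @ [x]) ! i \<le> (s @ [y]) ! i"
  proof (intro allI impI)
    fix i assume "i < length (t@[x])"
    then consider "i < length t" | "i = length t" by fastforce
    then show "(t @ [x]) ! i \<le> (s @ [y]) ! i" using H L by cases (auto simp: nth_append)
  qed
qed

lemma leq_refl: "leq t t" by (simp add: leq_def)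

lemma leq_antisym: "length t = length s \<Longrightarrow> leq t s \<Longrightarrow> leq s t \<Longrightarrow> t = s"
  unfolding leq_def by (intro nth_equalityI) (auto intro: antisym)

lemma leq_trans: "length t = length s \<Longrightarrow> leq t s \<Longrightarrow> leq s r \<Longrightarrow> leq t r"
  unfolding leq_def using le_trans by metis

lemma leq_sum:
  assumes "length t = length s" "leq t s" "t \<noteq> s"
  shows "sum_list t < sum_list s"
proof -
  have "\<exists>i<length t. t!i \<noteq> s!i"
  proof (rule ccontr)
    assume "\<not> (\<exists>i<length t. t!i \<noteq> s!i)"
    then have "t = s" using assms(1) by (intro nth_equalityI) auto
    then show False using assms(3) by simp
  qed
  then obtain i where i: "i < length t" "t!i < s!i" using assms(2) unfolding leq_def
    using le_neq_implies_less by blast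
  have "(\<Sum>j<length t. t!j) < (\<Sum>j<length t. s!j)"
    by (rule sum_strict_mono_ex1) (use assms(2) i in \<open>auto simp: leq_def\<close>)
  then show ?thesis using assms(1) by (simp add: sum_list_sum_nth atLeast0LessThan)
qed

lemma NN_cmp:
  assumes F: "F \<in> flag_faces (V (Suc m) n) nonnesting"
    and t: "t@[x] \<in> F" and s: "s@[y] \<in> F" and ne: "t@[x] \<noteq> s@[y]"
  shows "(leq t s \<and> x \<le> y) \<or> (leq s t \<and> y \<le> x)"
proof -
  have FV: "F \<subseteq> V (Suc m) n" using F by (auto simp: flag_faces_def)
  have L: "length t = length s" using t s FV snoc_len by (metis subsetD)
  have "nonnesting (t@[x]) (s@[y])" using face_pair[OF F t s ne] .
  then have "leq (t@[x]) (s@[y]) \<or> leq (s@[y]) (t@[x])" using nn_iff t s FV by blast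
  then show ?thesis using leq_snoc L by (metis)
qed

lemma NN_of_leq:
  assumes "I \<in> V k n" "J \<in> V k n" "leq I J \<or> leq J I"
  shows "nonnesting I J \<and> nonnesting J I"
  using nn_iff[OF assms(1,2)] nn_iff[OF assms(2,1)] assms(3) by blast



lemma NN_inj:
  assumes F: "F \<in> flag_faces (V (Suc m) n) nonnesting"
    and tx: "t@[x] \<in> F" and tx': "t@[x'] \<in> F" and xx': "x < x'"
    and sx: "s@[x] \<in> F" and sy: "s@[y'] \<in> F" and xy: "x < y'"
  shows "t = s"
proof (rule ccontr)
  assume ne: "t \<noteq> s"
  have FV: "F \<subseteq> V (Suc m) n" using F by (auto simp: flag_faces_def)
  have L: "length t = length s" using tx sx FV snoc_len by (metis subsetD)
  have c1: "(leq t s \<and> x' \<le> x) \<or> (leq s t \<and> x \<le> x')" using NN_cmp[OF F tx' sx] ne by simp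
  have c2: "(leq t s \<and> x \<le> y') \<or> (leq s t \<and> y' \<le> x)" using NN_cmp[OF F tx sy] ne by simp
  have c0: "leq t s \<or> leq s t" using NN_cmp[OF F tx sx] ne by auto
  then show False
  proof
    assume ts: "leq t s"
    then have "\<not> leq s t" using leq_antisym L ne by metis
    then show False using c1 ts xx' by auto
  next
    assume st: "leq s t"
    then have "\<not> leq t s" using leq_antisym L ne by metis
    then show False using c2 st xy by auto
  qed
qed

lemma NN_ext:
  assumes F: "F \<in> flag_faces (V (Suc m) n) nonnesting" and m: "0 < m"
    and sV: "s \<in> V m (n - 1)" and sT: "s \<notin> butlast ` F"
    and comp: "\<And>t. t \<in> butlast ` F \<Longrightarrow> leq t s \<or> leq s t"
  shows "\<exists>y. s@[y] \<in> V (Suc m) n \<and> (\<forall>I\<in>F. nonnesting (s@[y]) I \<and> nonnesting I (s@[y]))"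
proof -
  have FV: "F \<subseteq> V (Suc m) n" using F by (auto simp: flag_faces_def)
  have fin: "finite F" using FV V_finite finite_subset by blast
  have Ls: "length s = m" using sV V_len by blast
  define X where "X = insert (Suc (s!(m-1))) {x. \<exists>t. t@[x] \<in> F \<and> leq t s}"
  have "{x. \<exists>t. t@[x] \<in> F \<and> leq t s} \<subseteq> last ` F" by force
  then have finX: "finite X" unfolding X_def using fin finite_surj by blast
  define y where "y = Max X"
  have sn: "s!(m-1) \<le> n - 1" using V_bnd[OF sV, of "m-1"] m by auto
  have s1: "1 \<le> s!(m-1)" using V_bnd[OF sV, of "m-1"] m by auto
  have yn: "y \<le> n"
    unfolding y_def
  proof (subst Max_le_iff[OF finX])
    show "X \<noteq> {}" unfolding X_def by simp
    show "\<forall>a\<in>X. a \<le> n"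
    proof
      fix a assume "a \<in> X"
      then consider "a = Suc (s!(m-1))" | t where "t@[a] \<in> F" unfolding X_def by blast
      then show "a \<le> n"
      proof cases
        case 1 then show ?thesis using sn s1 by simp
      next
        case 2 then show ?thesis using V_snoc_D(4)[of t a m n] FV by auto
      qed
    qed
  qed
  have ys: "Suc (s!(m-1)) \<le> y" unfolding y_def using finX by (simp add: X_def)
  have sy_lt: "\<And>i. i < m \<Longrightarrow> s!i < y" using sorted_last_lt[OF sV m] ys by simp
  have syV: "s@[y] \<in> V (Suc m) n" by (rule V_snoc_I[OF sV sy_lt _ yn]) (use ys in auto)
  have main: "leq (s@[y]) I \<or> leq I (s@[y])" if I: "I \<in> F" for I
  proof -
    have IV: "I \<in> V (Suc m) n" using I FV by auto
    define t where "t = butlast I"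
    define x where "x = last I"
    have Ieq: "I = t@[x]" using snoc_butlast[OF IV] t_def x_def by simp
    have tx: "t@[x] \<in> F" using I Ieq by simp
    have Lt: "length t = m" using snoc_len IV Ieq by metis
    have ts: "t \<noteq> s" using sT I t_def by auto
    show ?thesis
    proof (cases "leq t s")
      case True
      then have "x \<in> X" unfolding X_def using tx by blast
      then have "x \<le> y" unfolding y_def using finX by simp
      then show ?thesis using True leq_snoc Lt Ls Ieq by metis
    next
      case False
      then have st: "leq s t" using comp I t_def by blast
      have "y \<le> x" unfolding y_def
      proof (subst Max_le_iff[OF finX])
        show "X \<noteq> {}" unfolding X_def by simp
        show "\<forall>a\<in>X. a \<le> x"
        proof
          fix a assume "a \<in> X"
          then consider "a = Suc (s!(m-1))" | t' where "t'@[a] \<in> F" "leq t' s" unfolding X_def by blast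
          then show "a \<le> x"
          proof cases
            case 1
            have "s!(m-1) \<le> t!(m-1)" using st Ls m unfolding leq_def by simp
            moreover have "t!(m-1) < x" using snoc_lt[of t x m n "m-1"] tx FV m by auto
            ultimately show ?thesis using 1 by simp
          next
            case 2
            have Lt': "length t' = m" using 2 FV snoc_len by (metis subsetD)
            have "t' \<noteq> t" using 2 False by auto
            then have "(leq t' t \<and> a \<le> x) \<or> (leq t t' \<and> x \<le> a)" using NN_cmp[OF F 2(1) tx] by simp
            moreover have "\<not> leq t t'" using leq_trans[of t t' s] 2 False Lt Lt' by auto
            ultimately show ?thesis by auto
          qed
        qed
      qed
      then show ?thesis using st leq_snoc Lt Ls Ieq by metis
    qed
  qed
  show ?thesis
  proof (intro exI conjI ballI)
    show "s@[y] \<in> V (Suc m) n" by (rule syV)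
  next
    fix I assume I: "I \<in> F"
    then have IV: "I \<in> V (Suc m) n" using FV by auto
    show "nonnesting (s@[y]) I" using NN_of_leq[OF syV IV main[OF I]] by simp
  next
    fix I assume I: "I \<in> F"
    then have IV: "I \<in> V (Suc m) n" using FV by auto
    show "nonnesting I (s@[y])" using NN_of_leq[OF syV IV main[OF I]] by simp
  qed
qed



lemma ex_max_f:
  fixes f :: "'a \<Rightarrow> nat"
  assumes "finite A" "A \<noteq> {}"
  shows "\<exists>a\<in>A. \<forall>b\<in>A. f b \<le> f a"
proof -
  have "Max (f ` A) \<in> f ` A" using assms by (intro Max_in) auto
  then obtain a where "a \<in> A" "f a = Max (f ` A)" by auto
  moreover have "\<forall>b\<in>A. f b \<le> Max (f ` A)" using assms by auto
  ultimately show ?thesis by metis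
qed

lemma ex_min_f:
  fixes f :: "'a \<Rightarrow> nat"
  assumes "finite A" "A \<noteq> {}"
  shows "\<exists>a\<in>A. \<forall>b\<in>A. f a \<le> f b"
proof -
  have "Min (f ` A) \<in> f ` A" using assms by (intro Min_in) auto
  then obtain a where "a \<in> A" "f a = Min (f ` A)" by auto
  moreover have "\<forall>b\<in>A. Min (f ` A) \<le> f b" using assms by auto
  ultimately show ?thesis by metis
qed

lemma leq_same: "leq (t@[x]) (t@[y]) \<or> leq (t@[y]) (t@[x])"
proof -
  have "x \<le> y \<or> y \<le> x" by linarith
  then show ?thesis using leq_snoc[of t t] leq_refl by blast
qed

lemma NN_add_helper:
  assumes F: "F \<in> maximal_faces (flag_faces (V (Suc m) n) nonnesting)"
    and zV: "z \<in> V (Suc m) n"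
    and cmp: "\<And>I. I \<in> F \<Longrightarrow> I \<noteq> z \<Longrightarrow> leq z I \<or> leq I z"
  shows "z \<in> F"
proof (rule maxface_add[OF F zV])
  fix I assume "I \<in> F" "I \<noteq> z"
  moreover then have "I \<in> V (Suc m) n" using maxface_D(1)[OF F] by auto
  ultimately show "nonnesting z I \<and> nonnesting I z" using NN_of_leq[OF zV] cmp by blast
qed

lemma NN_cover:
  assumes F: "F \<in> maximal_faces (flag_faces (V (Suc m) n) nonnesting)" and m: "0 < m"
    and x: "Suc m \<le> x" "x \<le> n - 1"
  shows "\<exists>t x'. t@[x] \<in> F \<and> t@[x'] \<in> F \<and> x < x'"
proof -
  have Ff: "F \<in> flag_faces (V (Suc m) n) nonnesting" using F by (simp add: maximal_faces_def)
  have FV: "F \<subseteq> V (Suc m) n" using maxface_D(1)[OF F] .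
  have fin: "finite F" using FV V_finite finite_subset by blast
  define t0 where "t0 = [1..<Suc m]"
  have t0B: "t0 @ [Suc m] \<in> V (Suc m) n" using x unfolding t0_def V_def by (auto simp: sorted_wrt_append)
  have Lt0: "length t0 = m" unfolding t0_def by simp
  have t0i: "\<And>i. i < m \<Longrightarrow> t0!i = Suc i" unfolding t0_def by (simp del: upt_Suc)
  have t0F: "t0 @ [Suc m] \<in> F"
  proof (rule NN_add_helper[OF F t0B])
    fix I assume "I \<in> F" "I \<noteq> t0 @ [Suc m]"
    then have IV: "I \<in> V (Suc m) n" using FV by auto
    have "leq (t0 @ [Suc m]) I" unfolding leq_def
    proof (intro allI impI)
      fix i assume "i < length (t0 @ [Suc m])"
      then have i: "i < Suc m" using Lt0 by simp
      have "(t0 @ [Suc m]) ! i = Suc i" using i t0i Lt0 by (cases "i < m") (auto simp: nth_append)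
      then show "(t0 @ [Suc m]) ! i \<le> I ! i" using V_ge[OF IV i] by simp
    qed
    then show "leq (t0 @ [Suc m]) I \<or> leq I (t0 @ [Suc m])" by simp
  qed
  define A where "A = {t. (\<exists>y. t@[y] \<in> F) \<and> (\<forall>i<m. t!i < x) \<and> length t = m}"
  define C where "C = {t\<in>A. \<exists>x'. t@[x'] \<in> F \<and> x < x'}"
  have t0A: "t0 \<in> A" unfolding A_def using t0F t0i Lt0 x by auto
  have "A \<subseteq> butlast ` F" unfolding A_def by force
  then have finA: "finite A" using fin finite_subset by blast
  have finC: "finite C" using finA unfolding C_def by simp
  have Atail: "\<And>t y. t \<in> A \<Longrightarrow> t@[y] \<in> F \<Longrightarrow> t \<in> V m (n-1)" using V_snoc_D(1) FV by blast
  have CnE: "C \<noteq> {}"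
  proof
    assume Ce: "C = {}"
    obtain t1 where t1A: "t1 \<in> A" and t1max: "\<And>s. s \<in> A \<Longrightarrow> sum_list s \<le> sum_list t1"
      using ex_max_f[OF finA, of sum_list] t0A by blast
    obtain y1 where y1: "t1@[y1] \<in> F" using t1A unfolding A_def by blast
    have Lt1: "length t1 = m" using t1A unfolding A_def by blast
    have t1x: "\<forall>i<m. t1!i < x" using t1A unfolding A_def by blast
    have t1V: "t1 \<in> V m (n-1)" using Atail[OF t1A y1] .
    have zV: "t1 @ [Suc x] \<in> V (Suc m) n" by (rule V_snoc_I[OF t1V]) (use t1x x in auto)
    have "t1 @ [Suc x] \<in> F"
    proof (rule NN_add_helper[OF F zV])
      fix I assume I: "I \<in> F" "I \<noteq> t1 @ [Suc x]"
      then have IV: "I \<in> V (Suc m) n" using FV by auto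
      define s where "s = butlast I"
      define y where "y = last I"
      have Ieq: "I = s@[y]" using snoc_butlast[OF IV] s_def y_def by simp
      have sy: "s@[y] \<in> F" using I Ieq by simp
      have Ls: "length s = m" using snoc_len IV Ieq by metis
      show "leq (t1 @ [Suc x]) I \<or> leq I (t1 @ [Suc x])"
      proof (cases "s = t1")
        case True then show ?thesis using Ieq leq_same by simp
      next
        case False
        then have "(leq s t1 \<and> y \<le> y1) \<or> (leq t1 s \<and> y1 \<le> y)" using NN_cmp[OF Ff sy y1] by auto
        then have c: "leq s t1 \<or> leq t1 s" by auto
        show ?thesis
        proof (cases "leq s t1")
          case True
          have "\<forall>i<m. s!i < x" using True t1x Ls unfolding leq_def by (meson le_less_trans)
          then have "s \<in> A" unfolding A_def using sy Ls by blast
          have "y \<le> x"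
          proof (rule ccontr)
            assume "\<not> y \<le> x"
            then have "s \<in> C" unfolding C_def using \<open>s \<in> A\<close> sy by auto
            then show False using Ce by simp
          qed
          then have "y \<le> Suc x" by simp
          then show ?thesis using True Ieq leq_snoc Ls Lt1 by metis
        next
          case False
          then have t1s: "leq t1 s" using c by simp
          have "s \<notin> A"
          proof
            assume "s \<in> A"
            then have "sum_list s \<le> sum_list t1" by (rule t1max)
            moreover have "sum_list t1 < sum_list s" using leq_sum[OF _ t1s] Lt1 Ls \<open>s \<noteq> t1\<close> by auto
            ultimately show False by simp
          qed
          then obtain i where i: "i < m" "x \<le> s!i" unfolding A_def using sy Ls by (auto simp: not_less)
          have "s!i < y" using snoc_lt[of s y m n i] sy FV i by auto
          then have "Suc x \<le> y" using i by simp
          then show ?thesis using t1s Ieq leq_snoc Ls Lt1 by metis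
        qed
      qed
    qed
    then have "t1 \<in> C" unfolding C_def using t1A by blast
    then show False using Ce by simp
  qed
  obtain ts where tsC: "ts \<in> C" and tsmin: "\<And>s. s \<in> C \<Longrightarrow> sum_list ts \<le> sum_list s"
    using ex_min_f[OF finC CnE, of sum_list] by blast
  obtain x' where tsx': "ts@[x'] \<in> F" "x < x'" using tsC unfolding C_def by blast
  have Lts: "length ts = m" using tsC unfolding C_def A_def by blast
  have tsx: "\<forall>i<m. ts!i < x" using tsC unfolding C_def A_def by blast
  have tsV: "ts \<in> V m (n-1)" using V_snoc_D(1) tsx' FV by blast
  have zV: "ts @ [x] \<in> V (Suc m) n" by (rule V_snoc_I[OF tsV]) (use tsx x in auto)
  have "ts @ [x] \<in> F"
  proof (rule NN_add_helper[OF F zV])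
    fix I assume I: "I \<in> F" "I \<noteq> ts @ [x]"
    then have IV: "I \<in> V (Suc m) n" using FV by auto
    define s where "s = butlast I"
    define y where "y = last I"
    have Ieq: "I = s@[y]" using snoc_butlast[OF IV] s_def y_def by simp
    have sy: "s@[y] \<in> F" using I Ieq by simp
    have Ls: "length s = m" using snoc_len IV Ieq by metis
    show "leq (ts @ [x]) I \<or> leq I (ts @ [x])"
    proof (cases "s = ts")
      case True then show ?thesis using Ieq leq_same by simp
    next
      case False
      then have c: "(leq s ts \<and> y \<le> x') \<or> (leq ts s \<and> x' \<le> y)" using NN_cmp[OF Ff sy tsx'(1)] by auto
      show ?thesis
      proof (cases "leq s ts")
        case True
        have "y \<le> x"
        proof (rule ccontr)
          assume "\<not> y \<le> x"
          then have xy: "x < y" by simp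
          have "\<forall>i<m. s!i < x" using True tsx Ls unfolding leq_def by (meson le_less_trans)
          then have "s \<in> C" unfolding C_def A_def using sy Ls xy by blast
          then have "sum_list ts \<le> sum_list s" by (rule tsmin)
          moreover have "sum_list s < sum_list ts" using leq_sum[OF _ True] Lts Ls False by auto
          ultimately show False by simp
        qed
        then show ?thesis using True Ieq leq_snoc Ls Lts by metis
      next
        case nst: False
        then have tss: "leq ts s" "x' \<le> y" using c by auto
        then have "x \<le> y" using tsx' by simp
        then show ?thesis using tss Ieq leq_snoc Ls Lts by metis
      qed
    qed
  qed
  then show ?thesis using tsx' by blast
qed

lemma NN_pure:
  "1 \<le> k \<Longrightarrow> k < n \<Longrightarrow> F \<in> maximal_faces (NN_complex k n) \<Longrightarrow> finite F \<and> card F = k * (n - k) + 1"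
proof (induction k arbitrary: n F)
  case 0 then show ?case by simp
next
  case (Suc m)
  have F: "F \<in> maximal_faces (flag_faces (V (Suc m) n) nonnesting)"
    using Suc.prems by (simp add: NN_complex_def)
  show ?case
  proof (cases "m = 0")
    case True
    have "finite F \<and> card F = 1 * (n - 1) + 1"
      by (rule base_case[of F n nonnesting]) (use F True Suc.prems in \<open>auto simp: nonnesting_def V_def\<close>)
    then show ?thesis using True by simp
  next
    case False
    then have m: "0 < m" by simp
    have Ff: "F \<in> flag_faces (V (Suc m) n) nonnesting" using F by (simp add: maximal_faces_def)
    have FV: "F \<subseteq> V (Suc m) n" using maxface_D(1)[OF F] .
    let ?T = "butlast ` F"
    have pr: "nonnesting t s" if "t@[x] \<in> F" "s@[y] \<in> F" "t \<noteq> s" for t x s y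
    proof -
      have "leq t s \<or> leq s t" using NN_cmp[OF Ff that(1,2)] that(3) by auto
      moreover have "t \<in> V m (n-1)" "s \<in> V m (n-1)" using V_snoc_D(1) that FV by blast+
      ultimately show ?thesis using NN_of_leq by blast
    qed
    have Tf: "?T \<in> flag_faces (V m (n - 1)) nonnesting"
      by (rule T_face[OF Ff]) (use pr in blast)
    have Tmax: "?T \<in> maximal_faces (NN_complex m (n - 1))"
      unfolding maximal_faces_def NN_complex_def
    proof (intro CollectI conjI ballI impI)
      show "?T \<in> flag_faces (V m (n - 1)) nonnesting" by (rule Tf)
      fix G assume G: "G \<in> flag_faces (V m (n - 1)) nonnesting" and TG: "?T \<subseteq> G"
      show "G = ?T"
      proof (rule ccontr)
        assume "G \<noteq> ?T"
        then obtain s where sG: "s \<in> G" and sT: "s \<notin> ?T" using TG by blast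
        have GV: "G \<subseteq> V m (n-1)" using G by (auto simp: flag_faces_def)
        have sV: "s \<in> V m (n - 1)" using GV sG by auto
        have comp: "\<And>t. t \<in> ?T \<Longrightarrow> leq t s \<or> leq s t"
        proof -
          fix t assume tT: "t \<in> ?T"
          then have tG: "t \<in> G" "s \<noteq> t" using TG sT by auto
          then have "nonnesting s t" using G sG by (auto simp: flag_faces_def)
          then show "leq t s \<or> leq s t" using nn_iff[OF sV] tG GV by blast
        qed
        obtain y where y: "s@[y] \<in> V (Suc m) n" "\<forall>I\<in>F. nonnesting (s@[y]) I \<and> nonnesting I (s@[y])"
          using NN_ext[OF Ff m sV sT comp] by blast
        have "s@[y] \<in> F" by (rule maxface_add[OF F y(1)]) (use y(2) in blast)
        then have "s \<in> ?T" by force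
        then show False using sT by simp
      qed
    qed
    have IH: "finite ?T \<and> card ?T = m * (n - 1 - m) + 1"
      using Suc.IH[OF _ _ Tmax] m Suc.prems by auto
    have "finite F \<and> card F = Suc m * (n - Suc m) + 1"
    proof (rule step_generic[OF F])
      show "card ?T = m * (n - 1 - m) + 1" using IH by simp
    next
      fix t x x' s y' assume "t@[x] \<in> F" "t@[x'] \<in> F" "x < x'" "s@[x] \<in> F" "s@[y'] \<in> F" "x < y'"
      then show "t = s" using NN_inj[OF Ff] by blast
    next
      fix x assume "Suc m \<le> x" "x \<le> n - 1"
      then show "\<exists>t x'. t@[x] \<in> F \<and> t@[x'] \<in> F \<and> x < x'" using NN_cover[OF F m] by blast
    qed
    then show ?thesis by simp
  qed
qed

theorem corollary2p11:
  fixes k n :: nat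
  assumes "1 \<le> k" and "k \<le> n - 1"
  shows "(\<forall>F\<in>maximal_faces (NN_complex k n). finite F \<and> card F = k * (n - k) + 1)
       \<and> (\<forall>F\<in>maximal_faces (NC_complex k n). finite F \<and> card F = k * (n - k) + 1)"
proof -
  have "k < n" using assms by linarith
  then show ?thesis using NN_pure NC_pure assms(1) by blast
qed

end
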